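(* Let $K$ be a field, $\Lambda=\mathrm{diag}(a_1,\dots,a_n)$, $P=(p_{st})\in GL_n(K)$, $A=P^{-1}\Lambda P$, and $B=\mathrm{diag}(b_1,\dots,b_n)$, with all $a_i,b_i\in K$. Then $$T(A,B)=(-1)^{\lfloor n/2\rfloor}\,\delta(a_1,\dots,a_n)^n\,\delta(b_1,\dots,b_n)^n\,\frac{1}{(\det P)^n}\prod_{s=1}^n\prod_{t=1}^n p_{st}.$$
   Context: $M(A,B)\in M_{n^2}(K)$ is the block matrix of $n\times n$ blocks whose $(i,j)$-th block is $A^{j-1}B^{i-1}$ ($i,j=1,\dots,n$), and $T(A,B)=\det M(A,B)$. $\delta(x_1,\dots,x_n)=\prod_{s<t}(x_t-x_s)$. *)

theory Defs
  imports "Jordan_Normal_Form.Determinant"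
begin

definition diag_matrix :: "nat \<Rightarrow> (nat \<Rightarrow> 'a::zero) \<Rightarrow> 'a mat" where
  "diag_matrix n d = mat n n (\<lambda>(i,j). if i = j then d i else 0)"

text \<open>M(A,B): n^2 x n^2 block matrix of n x n blocks; block (i,j) (1-indexed) is
  A^(j-1) B^(i-1).\<close>
definition M_mat :: "nat \<Rightarrow> 'a::comm_ring_1 mat \<Rightarrow> 'a mat \<Rightarrow> 'a mat" where
  "M_mat n A B = mat (n*n) (n*n)
     (\<lambda>(r,c). ((A ^\<^sub>m (c div n)) * (B ^\<^sub>m (r div n))) $$ (r mod n, c mod n))"

definition T_det :: "nat \<Rightarrow> 'a::comm_ring_1 mat \<Rightarrow> 'a mat \<Rightarrow> 'a" where
  "T_det n A B = det (M_mat n A B)"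

definition vdm_delta :: "nat \<Rightarrow> (nat \<Rightarrow> 'a::comm_ring_1) \<Rightarrow> 'a" where
  "vdm_delta n x = (\<Prod>t<n. \<Prod>s<t. x t - x s)"

end

theory Submission
  imports Defs
begin



lemma sum_shift_aux: "sum g {(a::nat)..<a+n} = (\<Sum>q<n. g (a+q))"
  by (induct n) auto

lemma sum_pairs: "(\<Sum>c\<in>{0..<(n::nat)*n}. g c) = (\<Sum>p<n. \<Sum>q<n. g (p*n+q))"
proof -
  have "(\<Sum>c\<in>{0..<n*n}. g c) = (\<Sum>c<n*n. g c)" by (rule sum.cong) auto
  also have "\<dots> = (\<Sum>p<n. sum g {p*n..<p*n+n})" by (rule sum.nat_group[symmetric])
  also have "\<dots> = (\<Sum>p<n. \<Sum>q<n. g (p*n+q))"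
  proof (rule sum.cong[OF refl])
    fix p
    show "sum g {p*n..<p*n+n} = (\<Sum>q<n. g (p*n+q))" using sum_shift_aux[of g "p*n" n] .
  qed
  finally show ?thesis .
qed

definition mk :: "nat \<Rightarrow> (nat \<Rightarrow> nat \<Rightarrow> nat \<Rightarrow> nat \<Rightarrow> 'a) \<Rightarrow> 'a mat" where
  "mk n f = mat (n*n) (n*n) (\<lambda>(r,c). f (r div n) (r mod n) (c div n) (c mod n))"

lemma mk_carrier[simp]: "mk n f \<in> carrier_mat (n*n) (n*n)" by (simp add: mk_def)
lemma mk_dim[simp]: "dim_row (mk n f) = n*n" "dim_col (mk n f) = n*n" by (simp_all add: mk_def)
lemma mk_index[simp]: "r < n*n \<Longrightarrow> c < n*n \<Longrightarrow> mk n f $$ (r,c) = f (r div n) (r mod n) (c div n) (c mod n)"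
  by (simp add: mk_def)

lemma mk_mult: "mk n f * mk n (g :: _ \<Rightarrow> _ \<Rightarrow> _ \<Rightarrow> _ \<Rightarrow> 'a::comm_ring_1) =
   mk n (\<lambda>i k j l. \<Sum>p<n. \<Sum>q<n. f i k p q * g p q j l)"
proof (rule eq_matI)
  fix r c assume r: "r < dim_row (mk n (\<lambda>i k j l. \<Sum>p<n. \<Sum>q<n. f i k p q * g p q j l))"
    and c: "c < dim_col (mk n (\<lambda>i k j l. \<Sum>p<n. \<Sum>q<n. f i k p q * g p q j l))"
  from r c have r': "r < n*n" and c': "c < n*n" by auto
  have "(mk n f * mk n g) $$ (r,c) = (\<Sum>x\<in>{0..<n*n}. mk n f $$ (r,x) * mk n g $$ (x,c))"
    using r' c' by (simp add: scalar_prod_def)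
  also have "\<dots> = (\<Sum>p<n. \<Sum>q<n. mk n f $$ (r,p*n+q) * mk n g $$ (p*n+q,c))"
    by (rule sum_pairs)
  also have "\<dots> = (\<Sum>p<n. \<Sum>q<n. f (r div n) (r mod n) p q * g p q (c div n) (c mod n))"
  proof (intro sum.cong refl)
    fix p q assume p: "p \<in> {..<n}" and q: "q \<in> {..<n}"
    have lt: "p*n+q < n*n"
    proof -
      have "p*n+q < p*n+n" using q by simp
      also have "\<dots> = (Suc p)*n" by simp
      also have "\<dots> \<le> n*n" using p by (intro mult_le_mono1) simp
      finally show ?thesis .
    qed
    have d: "(p*n+q) div n = p" "(p*n+q) mod n = q" using q by auto
    show "mk n f $$ (r,p*n+q) * mk n g $$ (p*n+q,c) = f (r div n) (r mod n) p q * g p q (c div n) (c mod n)"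
      using lt r' c' d by simp
  qed
  finally show "(mk n f * mk n g) $$ (r,c) = mk n (\<lambda>i k j l. \<Sum>p<n. \<Sum>q<n. f i k p q * g p q j l) $$ (r,c)"
    using r' c' by simp
qed auto





lemma sign_invol:
  fixes f :: "'b \<Rightarrow> 'b"
  assumes "\<And>x. f (f x) = x" "finite {x. f x \<noteq> x}"
  shows "sign f = (-1::int) ^ (card {x. f x \<noteq> x} div 2)"
  using assms
proof (induction "card {x. f x \<noteq> x}" arbitrary: f rule: less_induct)
  case less
  show ?case
  proof (cases "{x. f x \<noteq> x} = {}")
    case True then have "f = id" by auto
    then show ?thesis using True by simp
  next
    case False
    then obtain x where x: "f x \<noteq> x" by auto
    define y where "y = f x"
    have fy: "f y = x" using less.prems(1) y_def by simp
    have xy: "x \<noteq> y" using x y_def by simp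
    define g where "g = Transposition.transpose x y \<circ> f"
    have gx: "g x = x" using y_def xy by (simp add: g_def)
    have gy: "g y = y" using fy xy by (simp add: g_def)
    have gz: "g z = f z" if "z \<noteq> x" "z \<noteq> y" for z
    proof -
      have "f z \<noteq> x" using that fy less.prems(1) by metis
      moreover have "f z \<noteq> y" using that y_def less.prems(1) by metis
      ultimately show ?thesis by (simp add: g_def)
    qed
    have ginv: "g (g z) = z" for z
    proof -
      consider "z = x" | "z = y" | "z \<noteq> x" "z \<noteq> y" by blast
      then show ?thesis
      proof cases
        case 3
        have "f z \<noteq> x" using 3 fy less.prems(1) by metis
        moreover have "f z \<noteq> y" using 3 y_def less.prems(1) by metis
        ultimately show ?thesis using 3 gz less.prems(1) by simp
      qed (auto simp: gx gy)
    qed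
    have "g z \<noteq> z \<longleftrightarrow> f z \<noteq> z \<and> z \<noteq> x \<and> z \<noteq> y" for z
      using gx gy gz[of z] xy x fy by (cases "z = x \<or> z = y") auto
    then have set: "{z. g z \<noteq> z} = {z. f z \<noteq> z} - {x,y}" by auto
    have xin: "x \<in> {z. f z \<noteq> z}" "y \<in> {z. f z \<noteq> z}" using x fy xy by auto
    have card: "card {z. g z \<noteq> z} = card {z. f z \<noteq> z} - 2"
      unfolding set using xin xy less.prems(2) by (simp add: card_Diff_subset)
    have k2: "card {z. f z \<noteq> z} \<ge> 2"
    proof -
      have "card {x,y} \<le> card {z. f z \<noteq> z}" using xin less.prems(2) by (intro card_mono) auto
      then show ?thesis using xy by simp
    qed
    have fin: "finite {z. g z \<noteq> z}" unfolding set using less.prems(2) by simp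
    have IH: "sign g = (-1::int) ^ (card {z. g z \<noteq> z} div 2)"
      by (rule less.hyps) (use card k2 ginv fin in auto)
    have bg: "bij g" using ginv by (metis bijI' )
    have pg: "permutation g" using bg fin by (simp add: permutation)
    have feq: "f = Transposition.transpose x y \<circ> g"
      by (rule ext) (simp add: g_def)
    have "sign f = sign (Transposition.transpose x y) * sign g"
      unfolding feq by (rule sign_compose) (simp_all add: permutation_swap_id pg)
    also have "\<dots> = - sign g" using xy by (simp add: sign_swap_id)
    also have "\<dots> = (-1::int) ^ (card {z. f z \<noteq> z} div 2)"
    proof -
      obtain k where k: "card {z. f z \<noteq> z} = k + 2" using k2 by (metis le_add_diff_inverse2)
      show ?thesis unfolding IH card k by simp
    qed
    finally show ?thesis .
  qed
qed




definition tau :: "nat \<Rightarrow> nat \<Rightarrow> nat" where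
  "tau n r = (if r < n*n then (r mod n)*n + r div n else r)"

lemma pair_lt: "p < n \<Longrightarrow> q < (n::nat) \<Longrightarrow> p*n+q < n*n"
proof -
  assume p: "p < n" and q: "q < n"
  have "p*n+q < p*n+n" using q by simp
  also have "\<dots> = (Suc p)*n" by simp
  also have "\<dots> \<le> n*n" using p by (intro mult_le_mono1) simp
  finally show ?thesis .
qed

lemma divmod_lt: "r < n*n \<Longrightarrow> r div n < (n::nat)" "r < n*n \<Longrightarrow> r mod n < n"
  by (simp_all add: less_mult_imp_div_less) (cases "n = 0"; simp)

lemma tau_lt: "r < n*n \<Longrightarrow> tau n r < n*n"
  unfolding tau_def using divmod_lt pair_lt by simp

lemma pair_div: "q < n \<Longrightarrow> (p*n+q) div n = (p::nat)" "q < n \<Longrightarrow> (p*n+q) mod n = q"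
  by auto

lemma tau_div: "r < n*n \<Longrightarrow> tau n r div n = r mod n"
  unfolding tau_def using divmod_lt[of r n] pair_div by simp

lemma tau_mod: "r < n*n \<Longrightarrow> tau n r mod n = r div n"
  unfolding tau_def using divmod_lt[of r n] pair_div by simp

lemma tau_tau: "tau n (tau n r) = r"
proof (cases "r < n*n")
  case True
  have "tau n (tau n r) = (tau n r mod n) * n + tau n r div n"
    using tau_lt[OF True] by (simp add: tau_def)
  also have "\<dots> = (r div n)*n + r mod n" using True tau_div tau_mod by simp
  finally show ?thesis by simp
qed (simp add: tau_def)

lemma tau_permutes: "tau n permutes {0..<n*n}"
proof (rule bij_imp_permutes)
  show "bij_betw (tau n) {0..<n*n} {0..<n*n}"
    by (rule bij_betw_byWitness[of _ "tau n"]) (auto simp: tau_tau tau_lt)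
qed (simp add: tau_def)

lemma tau_moved: "{r. tau n r \<noteq> r} = {r. r < n*n \<and> r div n \<noteq> r mod n}"
proof -
  have "tau n r \<noteq> r \<longleftrightarrow> r < n*n \<and> r div n \<noteq> r mod n" for r
  proof (cases "r < n*n")
    case True
    have "tau n r = r \<longleftrightarrow> r div n = r mod n"
    proof
      assume "tau n r = r"
      then have "tau n r div n = r div n" by simp
      then show "r div n = r mod n" using tau_div[OF True] by simp
    next
      assume "r div n = r mod n"
      then show "tau n r = r" using True unfolding tau_def by (metis div_mult_mod_eq mult.commute)
    qed
    then show ?thesis using True by auto
  qed (simp add: tau_def)
  then show ?thesis by auto
qed

lemma card_moved: "card {r. r < (n::nat)*n \<and> r div n \<noteq> r mod n} = n*n - n"
proof -
  have fin: "finite {r. r < n*n}" by simp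
  have D: "{r. r < n*n \<and> r div n = r mod n} = (\<lambda>i. i*n+i) ` {..<n}"
  proof
    show "{r. r < n*n \<and> r div n = r mod n} \<subseteq> (\<lambda>i. i*n+i) ` {..<n}"
    proof
      fix r assume r: "r \<in> {r. r < n*n \<and> r div n = r mod n}"
      then have e: "r div n = r mod n" by simp
      have "r = (r div n)*n + r mod n" by simp
      then have "r = (r div n)*n + r div n" using e by simp
      moreover have "r div n < n" using r divmod_lt by auto
      ultimately show "r \<in> (\<lambda>i. i*n+i) ` {..<n}" by blast
    qed
  next
    show "(\<lambda>i. i*n+i) ` {..<n} \<subseteq> {r. r < n*n \<and> r div n = r mod n}"
      using pair_lt by auto
  qed
  have inj: "inj_on (\<lambda>i. i*n+i) {..<n}"
  proof (rule inj_onI)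
    fix x y assume "x*n+x = y*n+y"
    then have "x * Suc n = y * Suc n" by (simp add: algebra_simps)
    then show "x = y" by (simp del: mult_Suc_right)
  qed
  have cD: "card {r. r < n*n \<and> r div n = r mod n} = n"
    unfolding D using card_image[OF inj] by simp
  have "{r. r < n*n \<and> r div n \<noteq> r mod n} = {r. r < n*n} - {r. r < n*n \<and> r div n = r mod n}" by auto
  then have "card {r. r < n*n \<and> r div n \<noteq> r mod n} = card {r. r < n*n} - card {r. r < n*n \<and> r div n = r mod n}"
    using fin by (metis (no_types, lifting) card_Diff_subset finite_subset mem_Collect_eq subsetI)
  then show ?thesis using cD by simp
qed

lemma neg1_odd_mult: "odd k \<Longrightarrow> (-1::int) ^ (m*k) = (-1)^m"
proof -
  assume k: "odd k"
  have "(-1::int)^(m*k) = ((-1)^k)^m" by (metis mult.commute power_mult)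
  then show ?thesis using k by simp
qed

lemma parity_aux: "(-1::int) ^ ((n*n - n) div 2) = (-1) ^ (n div 2)"
proof -
  obtain m where "n = 2*m \<or> n = 2*m+1" by (metis oddE evenE)
  then show ?thesis
  proof
    assume n: "n = 2*m"
    show ?thesis
    proof (cases m)
      case 0 then show ?thesis using n by simp
    next
      case (Suc k)
      have "(n*n - n) div 2 = m*(2*k+1)" unfolding n Suc by (simp add: algebra_simps)
      moreover have "n div 2 = m" using n by simp
      ultimately show ?thesis by (simp only:) (rule neg1_odd_mult, simp)
    qed
  next
    assume n: "n = 2*m+1"
    have "(n*n - n) div 2 = m*(2*m + 1)" unfolding n by (simp add: algebra_simps)
    moreover have "n div 2 = m" using n by simp
    ultimately show ?thesis by (simp only:) (rule neg1_odd_mult, simp)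
  qed
qed

lemma sign_tau: "sign (tau n) = (-1::int) ^ (n div 2)"
proof -
  have "sign (tau n) = (-1::int) ^ (card {r. tau n r \<noteq> r} div 2)"
    by (rule sign_invol) (auto simp: tau_tau tau_moved)
  also have "\<dots> = (-1) ^ (n div 2)" unfolding tau_moved card_moved parity_aux ..
  finally show ?thesis .
qed





lemma det_perm_cols: assumes A: "A \<in> carrier_mat N N" and p: "p permutes {0..<N}"
  shows "det (mat N N (\<lambda>(i,j). A $$ (i, p j))) = signof p * det A"
proof -
  have AT: "transpose_mat A \<in> carrier_mat N N" using A by simp
  have eq: "mat N N (\<lambda>(i,j). A $$ (i, p j)) = transpose_mat (mat N N (\<lambda>(i,j). transpose_mat A $$ (p i, j)))"
    using A p by (intro eq_matI) (auto simp: permutes_in_image)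
  have "det (mat N N (\<lambda>(i,j). A $$ (i, p j))) = det (mat N N (\<lambda>(i,j). transpose_mat A $$ (p i, j)))"
    unfolding eq by (rule det_transpose[of _ N]) simp
  also have "\<dots> = signof p * det (transpose_mat A)" by (rule det_permute_rows[OF AT p])
  also have "\<dots> = signof p * det A" using det_transpose[OF A] by simp
  finally show ?thesis .
qed

lemma det_perm_both: assumes A: "A \<in> carrier_mat N N" and p: "p permutes {0..<N}"
  shows "det (mat N N (\<lambda>(i,j). A $$ (p i, p j))) = det A"
proof -
  let ?B = "mat N N (\<lambda>(i,j). A $$ (i, p j))"
  have B: "?B \<in> carrier_mat N N" by simp
  have eq: "mat N N (\<lambda>(i,j). A $$ (p i, p j)) = mat N N (\<lambda>(i,j). ?B $$ (p i, j))"
    using p by (intro eq_matI) (auto simp: permutes_in_image)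
  have "det (mat N N (\<lambda>(i,j). A $$ (p i, p j))) = signof p * det ?B"
    unfolding eq by (rule det_permute_rows[OF B p])
  also have "\<dots> = signof p * signof p * det A" using det_perm_cols[OF A p] by simp
  also have "signof p * signof p = (1::'a)" by (simp add: sign_def)
  finally show ?thesis by simp
qed

definition bd :: "nat \<Rightarrow> nat \<Rightarrow> (nat \<Rightarrow> 'a::zero mat) \<Rightarrow> 'a mat" where
  "bd k n D = mat (k*n) (k*n) (\<lambda>(r,c). if r div n = c div n then D (r div n) $$ (r mod n, c mod n) else 0)"

lemma bd_carrier[simp]: "bd k n D \<in> carrier_mat (k*n) (k*n)" by (simp add: bd_def)
lemma bd_dim[simp]: "dim_row (bd k n D) = k*n" "dim_col (bd k n D) = k*n" by (simp_all add: bd_def)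

lemma last_block: assumes "k*n \<le> r" "r < k*n+(n::nat)" shows "r div n = k" "r mod n = r - k*n"
proof -
  have r: "r = k*n + (r - k*n)" using assms by simp
  have lt: "r - k*n < n" using assms by simp
  show "r div n = k" by (subst r, rule pair_div(1)[OF lt])
  show "r mod n = r - k*n" by (subst r, subst pair_div(2)[OF lt]) simp
qed

lemma det_bd: assumes "\<And>x. x < k \<Longrightarrow> D x \<in> carrier_mat n n"
  shows "det (bd k n (D :: nat \<Rightarrow> 'a::idom mat)) = (\<Prod>x<k. det (D x))"
  using assms
proof (induction k)
  case 0
  then show ?case by (simp add: bd_def)
next
  case (Suc k)
  have Dk: "D k \<in> carrier_mat n n" using Suc.prems by simp
  have eq: "bd (Suc k) n D = four_block_mat (bd k n D) (0\<^sub>m (k*n) n) (0\<^sub>m n (k*n)) (D k)"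
  proof (rule eq_matI)
    fix r c assume r: "r < dim_row (four_block_mat (bd k n D) (0\<^sub>m (k*n) n) (0\<^sub>m n (k*n)) (D k))"
      and c: "c < dim_col (four_block_mat (bd k n D) (0\<^sub>m (k*n) n) (0\<^sub>m n (k*n)) (D k))"
    have r': "r < k*n+n" and c': "c < k*n+n" using r c Dk by auto
    show "bd (Suc k) n D $$ (r,c) = four_block_mat (bd k n D) (0\<^sub>m (k*n) n) (0\<^sub>m n (k*n)) (D k) $$ (r,c)"
    proof (cases "r < k*n")
      case True note rt = this
      have rd: "r div n < k" using rt by (simp add: less_mult_imp_div_less)
      show ?thesis
      proof (cases "c < k*n")
        case True
        then show ?thesis using rt r' c' Dk by (simp add: bd_def)
      next
        case False
        then have "c div n = k" using last_block c' by simp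
        then show ?thesis using rt False r' c' Dk rd by (simp add: bd_def)
      qed
    next
      case False note rf = this
      have rd: "r div n = k" "r mod n = r - k*n" using last_block rf r' by auto
      show ?thesis
      proof (cases "c < k*n")
        case True
        have "c div n < k" using True by (simp add: less_mult_imp_div_less)
        then show ?thesis using rf True rd r' c' Dk by (simp add: bd_def)
      next
        case False
        have "c div n = k" "c mod n = c - k*n" using last_block False c' by auto
        then show ?thesis using rf False rd r' c' Dk by (simp add: bd_def)
      qed
    qed
  qed (use Dk in auto)
  have "det (bd (Suc k) n D) = det (bd k n D) * det (D k)"
    unfolding eq by (rule det_four_block_mat_upper_right_zero[OF bd_carrier refl _ Dk]) simp
  then show ?case using Suc by simp
qed

lemma det_mk_bd: assumes "\<And>x. x < n \<Longrightarrow> D x \<in> carrier_mat n n"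
  shows "det (mk n (\<lambda>x y x' m. if x = x' then D x $$ (y,m) else (0::'a::idom))) = (\<Prod>x<n. det (D x))"
proof -
  have "mk n (\<lambda>x y x' m. if x = x' then D x $$ (y,m) else 0) = bd n n D"
    by (simp add: mk_def bd_def)
  then show ?thesis using det_bd[of n D n] assms by simp
qed

lemma det_mk_minor: assumes C: "C \<in> carrier_mat n n"
  shows "det (mk n (\<lambda>i k j l. if k = l then C $$ (i,j) else (0::'a::idom))) = det C ^ n"
proof -
  let ?B = "bd n n (\<lambda>_. C)"
  have "mk n (\<lambda>i k j l. if k = l then C $$ (i,j) else 0) = mat (n*n) (n*n) (\<lambda>(r,c). ?B $$ (tau n r, tau n c))"
    by (intro eq_matI) (auto simp: bd_def tau_lt tau_div tau_mod)
  then have "det (mk n (\<lambda>i k j l. if k = l then C $$ (i,j) else 0)) = det ?B"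
    using det_perm_both[OF bd_carrier tau_permutes] by simp
  also have "\<dots> = det C ^ n" using det_bd[of n "\<lambda>_. C" n] C by simp
  finally show ?thesis .
qed

lemma det_mk_mixed: assumes "\<And>x. x < n \<Longrightarrow> D x \<in> carrier_mat n n"
  shows "det (mk n (\<lambda>x y m l. if x = l then D x $$ (y,m) else (0::'a::idom))) =
     (-1) ^ (n div 2) * (\<Prod>x<n. det (D x))"
proof -
  let ?B = "bd n n D"
  have "mk n (\<lambda>x y m l. if x = l then D x $$ (y,m) else 0) = mat (n*n) (n*n) (\<lambda>(r,c). ?B $$ (r, tau n c))"
    by (intro eq_matI) (auto simp: bd_def tau_lt tau_div tau_mod)
  then have "det (mk n (\<lambda>x y m l. if x = l then D x $$ (y,m) else 0)) = signof (tau n) * det ?B"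
    using det_perm_cols[OF bd_carrier tau_permutes] by simp
  also have "signof (tau n) = ((-1) ^ (n div 2) :: 'a)" using sign_tau[of n]
    by (metis of_int_minus of_int_1 of_int_power)
  finally show ?thesis using det_bd[of n D n] assms by simp
qed

lemma det_diag: "det (diag_matrix n d) = (\<Prod>i<n. d i)"
proof -
  have "det (diag_matrix n d) = prod_list (diag_mat (diag_matrix n d))"
    by (rule det_upper_triangular[of _ n]) (auto simp: diag_matrix_def upper_triangular_def)
  also have "\<dots> = (\<Prod>i<n. d i)" unfolding prod_list_diag_prod
    by (simp add: diag_matrix_def lessThan_atLeast0)
  finally show ?thesis .
qed




lemma diag_matrix_carrier[simp]: "diag_matrix n d \<in> carrier_mat n n" by (simp add: diag_matrix_def)
lemma diag_matrix_dim[simp]: "dim_row (diag_matrix n d) = n" "dim_col (diag_matrix n d) = n" by (simp_all add: diag_matrix_def)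

lemma diag_mult_index: assumes "M \<in> carrier_mat n m" "i < n" "j < m"
  shows "(diag_matrix n d * M) $$ (i,j) = d i * M $$ (i,j)"
proof -
  have "(diag_matrix n d * M) $$ (i,j) = (\<Sum>k\<in>{0..<n}. (if i = k then d i else 0) * M $$ (k,j))"
    using assms by (simp add: scalar_prod_def diag_matrix_def)
  also have "\<dots> = (\<Sum>k\<in>{0..<n}. if i = k then d i * M $$ (k,j) else 0)"
    by (rule sum.cong) auto
  also have "\<dots> = d i * M $$ (i,j)" using assms by simp
  finally show ?thesis .
qed

lemma mult_diag_index: assumes "M \<in> carrier_mat m n" "i < m" "j < n"
  shows "(M * diag_matrix n d) $$ (i,j) = M $$ (i,j) * d j"
proof -
  have "(M * diag_matrix n d) $$ (i,j) = (\<Sum>k\<in>{0..<n}. M $$ (i,k) * (if k = j then d k else 0))"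
    using assms by (simp add: scalar_prod_def diag_matrix_def)
  also have "\<dots> = (\<Sum>k\<in>{0..<n}. if k = j then M $$ (i,k) * d j else 0)"
    by (rule sum.cong) auto
  also have "\<dots> = M $$ (i,j) * d j" using assms by simp
  finally show ?thesis .
qed



definition vdm :: "nat \<Rightarrow> (nat \<Rightarrow> 'a::comm_ring_1) \<Rightarrow> 'a mat" where
  "vdm n x = mat n n (\<lambda>(i,j). x i ^ j)"

lemma vdm_carrier[simp]: "vdm n x \<in> carrier_mat n n" by (simp add: vdm_def)
lemma vdm_dim[simp]: "dim_row (vdm n x) = n" "dim_col (vdm n x) = n" by (simp_all add: vdm_def)

lemma vdm_delta_Suc: "vdm_delta (Suc n) x = (\<Prod>i<n. x (Suc i) - x 0) * vdm_delta n (\<lambda>i. x (Suc i))"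
proof -
  have "vdm_delta (Suc n) x = (\<Prod>t<Suc n. \<Prod>s<t. x t - x s)" by (simp add: vdm_delta_def)
  also have "\<dots> = (\<Prod>t<n. \<Prod>s<Suc t. x (Suc t) - x s)"
    by (simp only: prod.lessThan_Suc_shift) simp
  also have "\<dots> = (\<Prod>t<n. (x (Suc t) - x 0) * (\<Prod>s<t. x (Suc t) - x (Suc s)))"
    by (simp only: prod.lessThan_Suc_shift)
  also have "\<dots> = (\<Prod>i<n. x (Suc i) - x 0) * vdm_delta n (\<lambda>i. x (Suc i))"
    by (simp add: prod.distrib vdm_delta_def)
  finally show ?thesis .
qed

lemma det_vdm: "det (vdm n (x :: nat \<Rightarrow> 'a::idom)) = vdm_delta n x"
proof (induction n arbitrary: x)
  case 0
  then show ?case by (simp add: vdm_delta_def)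
next
  case (Suc n)
  define E :: "'a mat" where "E = mat (Suc n) (Suc n) (\<lambda>(i,j). if i = j then 1 else if Suc i = j then - x 0 else 0)"
  have E: "E \<in> carrier_mat (Suc n) (Suc n)" by (simp add: E_def)
  have detE: "det E = 1"
  proof -
    have "det E = prod_list (diag_mat E)"
      by (rule det_upper_triangular[OF _ E]) (auto simp: E_def upper_triangular_def)
    also have "\<dots> = 1" unfolding prod_list_diag_prod by (simp add: E_def)
    finally show ?thesis .
  qed
  define A4 where "A4 = mat n n (\<lambda>(i,j). x (Suc i) ^ Suc j - x 0 * x (Suc i) ^ j)"
  have A4: "A4 \<in> carrier_mat n n" by (simp add: A4_def)
  have entry: "(vdm (Suc n) x * E) $$ (i,j) = (if j = 0 then 1 else x i ^ j - x 0 * x i ^ (j - 1))"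
    if i: "i < Suc n" and j: "j < Suc n" for i j
  proof -
    have "(vdm (Suc n) x * E) $$ (i,j) = (\<Sum>k\<in>{0..<Suc n}. x i ^ k * E $$ (k,j))"
      using i j E by (simp add: scalar_prod_def vdm_def)
    also have "\<dots> = (\<Sum>k\<in>{0..<Suc n}. (if k = j then x i ^ k else 0) - (if j \<noteq> 0 then (if k = j - 1 then x 0 * x i ^ k else 0) else 0))"
      by (rule sum.cong[OF refl]) (use j in \<open>auto simp: E_def\<close>)
    also have "\<dots> = (if j = 0 then 1 else x i ^ j - x 0 * x i ^ (j - 1))"
      using j by (simp add: sum_subtractf, arith)
    finally show ?thesis .
  qed
  have eq: "vdm (Suc n) x * E = four_block_mat (1\<^sub>m 1) (0\<^sub>m 1 n) (mat n 1 (\<lambda>_. 1)) A4"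
  proof (rule eq_matI)
    fix i j assume i: "i < dim_row (four_block_mat (1\<^sub>m 1) (0\<^sub>m 1 n) (mat n 1 (\<lambda>_. 1)) A4)"
      and j: "j < dim_col (four_block_mat (1\<^sub>m 1) (0\<^sub>m 1 n) (mat n 1 (\<lambda>_. 1)) A4)"
    have i': "i < Suc n" and j': "j < Suc n" using i j A4 by auto
    show "(vdm (Suc n) x * E) $$ (i,j) = four_block_mat (1\<^sub>m 1) (0\<^sub>m 1 n) (mat n 1 (\<lambda>_. 1)) A4 $$ (i,j)"
      unfolding entry[OF i' j'] using i' j' A4
      by (cases i; cases j) (auto simp: A4_def)
  qed (use A4 E in \<open>auto simp: vdm_def\<close>)
  have "det (vdm (Suc n) x) = det (vdm (Suc n) x * E)"
    using det_mult[OF vdm_carrier E] detE by simp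
  also have "\<dots> = det (1\<^sub>m 1 :: 'a mat) * det A4"
    unfolding eq by (rule det_four_block_mat_upper_right_zero[OF _ refl _ A4]) auto
  also have "A4 = diag_matrix n (\<lambda>i. x (Suc i) - x 0) * vdm n (\<lambda>i. x (Suc i))"
  proof (rule eq_matI)
    fix i j assume "i < dim_row (diag_matrix n (\<lambda>i. x (Suc i) - x 0) * vdm n (\<lambda>i. x (Suc i)))"
      "j < dim_col (diag_matrix n (\<lambda>i. x (Suc i) - x 0) * vdm n (\<lambda>i. x (Suc i)))"
    then have ij: "i < n" "j < n" by auto
    show "A4 $$ (i,j) = (diag_matrix n (\<lambda>i. x (Suc i) - x 0) * vdm n (\<lambda>i. x (Suc i))) $$ (i,j)"
      by (subst diag_mult_index[OF vdm_carrier ij]) (use ij in \<open>simp add: A4_def vdm_def algebra_simps\<close>)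
  qed (auto simp: A4_def)
  also have "det (1\<^sub>m 1 :: 'a mat) * det \<dots> = (\<Prod>i<n. x (Suc i) - x 0) * vdm_delta n (\<lambda>i. x (Suc i))"
    by (simp add: det_mult[OF diag_matrix_carrier vdm_carrier] det_diag Suc.IH)
  also have "\<dots> = vdm_delta (Suc n) x" by (rule vdm_delta_Suc[symmetric])
  finally show ?case .
qed




lemma mk_cong: "(\<And>i k j l. i < n \<Longrightarrow> k < n \<Longrightarrow> j < n \<Longrightarrow> l < n \<Longrightarrow> f i k j l = g i k j l) \<Longrightarrow> mk n f = mk n g"
  by (intro eq_matI) (auto simp: divmod_lt)

lemma diag_pow: "diag_matrix n a ^\<^sub>m j = diag_matrix n (\<lambda>i. (a i :: 'a::comm_ring_1) ^ j)"
proof (induction j)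
  case 0
  show ?case by (intro eq_matI) (auto simp: diag_matrix_def)
next
  case (Suc j)
  have "diag_matrix n a ^\<^sub>m Suc j = diag_matrix n (\<lambda>i. a i ^ j) * diag_matrix n a" using Suc by simp
  also have "\<dots> = diag_matrix n (\<lambda>i. a i ^ Suc j)"
  proof (rule eq_matI)
    fix i k assume "i < dim_row (diag_matrix n (\<lambda>i. a i ^ Suc j))" "k < dim_col (diag_matrix n (\<lambda>i. a i ^ Suc j))"
    then have ik: "i < n" "k < n" by auto
    show "(diag_matrix n (\<lambda>i. a i ^ j) * diag_matrix n a) $$ (i,k) = diag_matrix n (\<lambda>i. a i ^ Suc j) $$ (i,k)"
      by (subst mult_diag_index[OF diag_matrix_carrier ik]) (use ik in \<open>simp add: diag_matrix_def\<close>)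
  qed auto
  finally show ?case .
qed

lemma conj_pow:
  assumes P: "P \<in> carrier_mat n n" and Pi: "Pinv \<in> carrier_mat n n"
    and PPi: "P * Pinv = 1\<^sub>m n" and PiP: "Pinv * P = 1\<^sub>m n" and D: "D \<in> carrier_mat n n"
  shows "(Pinv * D * P) ^\<^sub>m j = Pinv * (D ^\<^sub>m j) * (P :: 'a::comm_ring_1 mat)"
proof (induction j)
  case 0
  have "(Pinv * D * P) ^\<^sub>m 0 = 1\<^sub>m n" using Pi by simp
  also have "\<dots> = Pinv * (D ^\<^sub>m 0) * P" using PiP Pi D by simp
  finally show ?case .
next
  case (Suc j)
  have Dj: "D ^\<^sub>m j \<in> carrier_mat n n" using D by simp
  have cancel: "P * (Pinv * Y) = Y" if "Y \<in> carrier_mat n m" for Y m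
    using that P Pi PPi by (simp add: assoc_mult_mat[symmetric, of P n n Pinv n Y m])
  have c1: "D ^\<^sub>m j * P \<in> carrier_mat n n" "Pinv * (D * P) \<in> carrier_mat n n" "D * P \<in> carrier_mat n n"
    "Pinv * (D ^\<^sub>m j * P) \<in> carrier_mat n n" "Pinv * D \<in> carrier_mat n n" "D ^\<^sub>m j * D \<in> carrier_mat n n"
    using P Pi D Dj by (auto intro!: mult_carrier_mat)
  have "(Pinv * D * P) ^\<^sub>m Suc j = (Pinv * (D ^\<^sub>m j) * P) * (Pinv * D * P)" using Suc by simp
  also have "\<dots> = Pinv * (D ^\<^sub>m j * (P * (Pinv * (D * P))))"
    using P Pi D Dj c1 by (simp add: assoc_mult_mat[of _ n n _ n _ n])
  also have "\<dots> = Pinv * (D ^\<^sub>m j * (D * P))" using cancel[of "D * P" n] D P by simp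
  also have "\<dots> = Pinv * (D ^\<^sub>m Suc j) * P"
    using P Pi D Dj c1 by (simp add: assoc_mult_mat[of _ n n _ n _ n])
  finally show ?case .
qed




lemma mult_index_sum: "A \<in> carrier_mat n m \<Longrightarrow> B \<in> carrier_mat m p \<Longrightarrow> i < n \<Longrightarrow> j < p \<Longrightarrow>
  (A * B) $$ (i,j) = (\<Sum>k\<in>{0..<m}. A $$ (i,k) * B $$ (k,j))"
  by (simp add: scalar_prod_def)

theorem mainTheorem5:
  fixes n :: nat and a b :: "nat \<Rightarrow> 'a::field" and P Pinv :: "'a mat"
  assumes "P \<in> carrier_mat n n" and "Pinv \<in> carrier_mat n n"
    and "inverts_mat P Pinv" and "inverts_mat Pinv P"
  shows "T_det n (Pinv * diag_matrix n a * P) (diag_matrix n b) =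
    (-1) ^ (n div 2) * vdm_delta n a ^ n * vdm_delta n b ^ n * (1 / (det P) ^ n)
      * (\<Prod>s<n. \<Prod>t<n. P $$ (s,t))"
proof -
  note P = assms(1) and Pi = assms(2)
  have PPi: "P * Pinv = 1\<^sub>m n" using assms(3) P by (simp add: inverts_mat_def)
  have PiP: "Pinv * P = 1\<^sub>m n" using assms(4) Pi by (simp add: inverts_mat_def)
  let ?A = "Pinv * diag_matrix n a * P"
  let ?B = "diag_matrix n b"
  have Apow: "?A ^\<^sub>m j = Pinv * diag_matrix n (\<lambda>i. a i ^ j) * P" for j
    using conj_pow[OF P Pi PPi PiP diag_matrix_carrier, of a j] by (simp add: diag_pow)
  have entryM: "(?A ^\<^sub>m j * ?B ^\<^sub>m i) $$ (k,l) = (\<Sum>m<n. b l ^ i * (Pinv $$ (k,m) * P $$ (m,l)) * a m ^ j)"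
    if kl: "k < n" "l < n" for i j k l
  proof -
    have c1: "Pinv * diag_matrix n (\<lambda>i. a i ^ j) \<in> carrier_mat n n" using Pi by simp
    have c2: "Pinv * diag_matrix n (\<lambda>i. a i ^ j) * P \<in> carrier_mat n n" using c1 P by simp
    have "(?A ^\<^sub>m j * ?B ^\<^sub>m i) $$ (k,l) = (Pinv * diag_matrix n (\<lambda>i. a i ^ j) * P) $$ (k,l) * b l ^ i"
      unfolding Apow diag_pow by (rule mult_diag_index[OF c2 kl])
    also have "(Pinv * diag_matrix n (\<lambda>i. a i ^ j) * P) $$ (k,l) =
       (\<Sum>m\<in>{0..<n}. (Pinv * diag_matrix n (\<lambda>i. a i ^ j)) $$ (k,m) * P $$ (m,l))"
      by (rule mult_index_sum[OF c1 P kl])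
    also have "\<dots> = (\<Sum>m\<in>{0..<n}. Pinv $$ (k,m) * a m ^ j * P $$ (m,l))"
      by (rule sum.cong[OF refl]) (simp add: mult_diag_index[OF Pi] kl)
    finally show ?thesis
      by (simp add: sum_distrib_left sum_distrib_right lessThan_atLeast0 ac_simps)
  qed
  define F where "F = mk n (\<lambda>i k x y. if k = y then b x ^ i else 0)"
  define G where "G = mk n (\<lambda>x y m l. if x = l then Pinv $$ (y,m) * P $$ (m,x) else 0)"
  define V where "V = mk n (\<lambda>m l' j l. if l' = l then a m ^ j else 0)"
  have M: "M_mat n ?A ?B = mk n (\<lambda>i k j l. \<Sum>m<n. b l ^ i * (Pinv $$ (k,m) * P $$ (m,l)) * a m ^ j)"
    unfolding M_mat_def mk_def
    by (intro eq_matI) (auto simp: entryM divmod_lt)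
  have FG: "F * G = mk n (\<lambda>i k m l. b l ^ i * (Pinv $$ (k,m) * P $$ (m,l)))"
    unfolding F_def G_def mk_mult
  proof (rule mk_cong)
    fix i k m l assume "i < n" "k < n" "m < n" "l < n"
    have inner: "(\<Sum>q<n. (if k = q then b p ^ i else 0) * (if p = l then Pinv $$ (q,m) * P $$ (m,p) else 0))
      = (if p = l then b p ^ i * (Pinv $$ (k,m) * P $$ (m,p)) else 0)" for p
    proof -
      have "(\<Sum>q<n. (if k = q then b p ^ i else 0) * (if p = l then Pinv $$ (q,m) * P $$ (m,p) else 0))
        = (\<Sum>q<n. if q = k then (if p = l then b p ^ i * (Pinv $$ (q,m) * P $$ (m,p)) else 0) else 0)"
        by (rule sum.cong) auto
      also have "\<dots> = (if p = l then b p ^ i * (Pinv $$ (k,m) * P $$ (m,p)) else 0)"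
        using \<open>k < n\<close> by simp
      finally show ?thesis .
    qed
    have "(\<Sum>p<n. \<Sum>q<n. (if k = q then b p ^ i else 0) * (if p = l then Pinv $$ (q,m) * P $$ (m,p) else 0))
      = (\<Sum>p<n. if p = l then b p ^ i * (Pinv $$ (k,m) * P $$ (m,p)) else 0)"
      by (simp only: inner)
    also have "\<dots> = b l ^ i * (Pinv $$ (k,m) * P $$ (m,l))"
      using \<open>l < n\<close> by simp
    finally show "(\<Sum>p<n. \<Sum>q<n. (if k = q then b p ^ i else 0) * (if p = l then Pinv $$ (q,m) * P $$ (m,p) else 0))
      = b l ^ i * (Pinv $$ (k,m) * P $$ (m,l))" .
  qed
  have FGV: "F * G * V = M_mat n ?A ?B"
    unfolding FG V_def mk_mult M
  proof (rule mk_cong)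
    fix i k j l assume "i < n" "k < n" "j < n" "l < n"
    show "(\<Sum>p<n. \<Sum>q<n. b q ^ i * (Pinv $$ (k,p) * P $$ (p,q)) * (if q = l then a p ^ j else 0))
      = (\<Sum>m<n. b l ^ i * (Pinv $$ (k,m) * P $$ (m,l)) * a m ^ j)"
    proof (rule sum.cong[OF refl])
      fix p
      have "(\<Sum>q<n. b q ^ i * (Pinv $$ (k,p) * P $$ (p,q)) * (if q = l then a p ^ j else 0))
        = (\<Sum>q<n. if q = l then b q ^ i * (Pinv $$ (k,p) * P $$ (p,q)) * a p ^ j else 0)"
        by (intro sum.cong refl) auto
      also have "\<dots> = b l ^ i * (Pinv $$ (k,p) * P $$ (p,l)) * a p ^ j" using \<open>l < n\<close> by simp
      finally show "(\<Sum>q<n. b q ^ i * (Pinv $$ (k,p) * P $$ (p,q)) * (if q = l then a p ^ j else 0))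
        = b l ^ i * (Pinv $$ (k,p) * P $$ (p,l)) * a p ^ j" .
    qed
  qed
  have detF: "det F = vdm_delta n b ^ n"
  proof -
    have "F = mk n (\<lambda>i k j l. if k = l then transpose_mat (vdm n b) $$ (i,j) else 0)"
      unfolding F_def by (rule mk_cong) (auto simp: vdm_def)
    then have "det F = det (transpose_mat (vdm n b)) ^ n"
      using det_mk_minor[of "transpose_mat (vdm n b)" n] by simp
    also have "det (transpose_mat (vdm n b)) = vdm_delta n b"
      using det_transpose[OF vdm_carrier[of n b]] det_vdm[of n b] by simp
    finally show ?thesis .
  qed
  have detV: "det V = vdm_delta n a ^ n"
  proof -
    have "V = mk n (\<lambda>i k j l. if k = l then vdm n a $$ (i,j) else 0)"
      unfolding V_def by (rule mk_cong) (auto simp: vdm_def)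
    then show ?thesis using det_mk_minor[of "vdm n a" n] det_vdm[of n a] by simp
  qed
  define D where "D x = Pinv * diag_matrix n (\<lambda>m. P $$ (m,x))" for x
  have D: "D x \<in> carrier_mat n n" for x using Pi by (simp add: D_def)
  have detPi: "det Pinv = 1 / det P"
  proof -
    have h: "det P * det Pinv = 1" using det_mult[OF P Pi] PPi by simp
    then have "det P \<noteq> 0" by auto
    then show ?thesis using h by (simp add: field_simps mult.commute)
  qed
  have detG: "det G = (-1) ^ (n div 2) * (1 / det P) ^ n * (\<Prod>s<n. \<Prod>t<n. P $$ (s,t))"
  proof -
    have "G = mk n (\<lambda>x y m l. if x = l then D x $$ (y,m) else 0)"
      unfolding G_def by (rule mk_cong) (simp add: D_def mult_diag_index[OF Pi])
    then have "det G = (-1) ^ (n div 2) * (\<Prod>x<n. det (D x))"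
      using det_mk_mixed[of n D] D by simp
    also have "(\<Prod>x<n. det (D x)) = (\<Prod>x<n. det Pinv * (\<Prod>m<n. P $$ (m,x)))"
      by (intro prod.cong refl) (simp add: D_def det_mult[OF Pi diag_matrix_carrier] det_diag)
    also have "\<dots> = det Pinv ^ n * (\<Prod>x<n. \<Prod>m<n. P $$ (m,x))"
      by (simp add: prod.distrib)
    also have "(\<Prod>x<n. \<Prod>m<n. P $$ (m,x)) = (\<Prod>s<n. \<Prod>t<n. P $$ (s,t))"
      by (rule prod.swap)
    finally show ?thesis using detPi by simp
  qed
  have "T_det n ?A ?B = det (F * G * V)" unfolding T_det_def FGV ..
  also have "\<dots> = det F * det G * det V"
    using det_mult[of "F * G" "n*n" V] det_mult[of F "n*n" G]
    by (simp add: F_def G_def V_def mk_mult)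
  also have "\<dots> = (-1) ^ (n div 2) * vdm_delta n a ^ n * vdm_delta n b ^ n * (1 / (det P) ^ n)
      * (\<Prod>s<n. \<Prod>t<n. P $$ (s,t))"
    unfolding detF detG detV by (simp add: power_one_over)
  finally show ?thesis .
qed


end
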